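(* Let $r$ be a ring of an $m$-partial SCS that crosses itself at a crossing point $c$ between circles $C_i$ and $C_j$. Then every starving robot in $r$ passes through $c$ periodically, alternating between the two crossing directions (from $C_i$ to $C_j$ and from $C_j$ to $C_i$).
   Context: Let $T=\{C_1,\dots,C_n\}$ be pairwise disjoint unit circles in the plane (trajectories) and $\epsilon<0.5$ a communication range. The graph of potential links $G_\epsilon(T)$ has the circle centers as nodes and an edge $\{i,j\}$ whenever the centers of $C_i,C_j$ are at distance at most $2+\epsilon$; it is assumed connected. Points of a circle are identified with angles (modulo $2\pi$), and a robot traverses a circle in one time unit. A schedule is a pair $(f,g)$, $f:T\to[0,2\pi)$, $g:T\to\{-1,1\}$ ($1$ = counterclockwise); the robot on $C_i$ is at angle $f(C_i)+2\pi g(C_i)t$ at time $t$. A communication graph $G=(V,E)$ is a connected spanning subgraph of $G_\epsilon(T)$. The link position $\phi_{ij}$ is the point of $C_i$ closest to $C_j$. A schedule is $G$-synchronized if for every $\{i,j\}\in E$ the robot on $C_i$ is at $\phi_{ij}$ exactly when the robot on $C_j$ is at $\phi_{ji}$. An SCS with communication graph $G$ consists of $n$ robots, one per circle, moving under a $G$-synchronized schedule with $g(C_i)=-g(C_j)$ for all $\{i,j\}\in E$. Shifting protocol: when a robot on $C_i$ reaches $\phi_{ij}$ and there is no robot at $\phi_{ji}$, it moves to $C_j$ and thereafter follows the schedule of $C_j$. An $m$-partial SCS is obtained by removing $n-m$ robots, the remaining $m$ applying the shifting protocol. A surviving robot starves if every time it arrives at a link position the corresponding neighbor is absent. A ring is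 the closed path traversed by a starving robot (following the assigned direction on each circle and always shifting to the neighboring circle at link positions). The crossing point of neighboring circles $C_i,C_j$ is the midpoint of the segment joining $\phi_{ij}$ and $\phi_{ji}$; it can be traversed in two crossing directions, $C_i\to C_j$ and $C_j\to C_i$. A ring crosses itself at a crossing point if it traverses that point in both crossing directions. *)

theory Defs
  imports Complex_Main
begin

text \<open>Circle C_i is the unit circle
  with centre p i, for i < n. Angles on a circle are real numbers; the point at
  angle a on C_i is p i + cis a (so angles are implicitly taken modulo 2 pi).\<close>

definition linkpt :: "(nat \<Rightarrow> complex) \<Rightarrow> nat \<Rightarrow> nat \<Rightarrow> complex" where
  "linkpt p i j = p i + (p j - p i) / complex_of_real (cmod (p j - p i))"

text \<open>Crossing point of neighbouring circles C_i, C_j (for documentation; a crossing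
  point is identified with the unordered pair of circles, and a crossing direction
  C_a -> C_b with the ordered pair (a,b)).\<close>
definition crossing_point :: "(nat \<Rightarrow> complex) \<Rightarrow> nat \<Rightarrow> nat \<Rightarrow> complex" where
  "crossing_point p i j = (linkpt p i j + linkpt p j i) / 2"

definition valid_trajectories :: "nat \<Rightarrow> (nat \<Rightarrow> complex) \<Rightarrow> real \<Rightarrow> bool" where
  "valid_trajectories n p \<epsilon> \<longleftrightarrow> 0 < \<epsilon> \<and> \<epsilon> < 1/2 \<and>
     (\<forall>i<n. \<forall>j<n. i \<noteq> j \<longrightarrow> cmod (p i - p j) > 2)"

definition comm_graph :: "nat \<Rightarrow> (nat \<Rightarrow> complex) \<Rightarrow> real \<Rightarrow> nat set set \<Rightarrow> bool" where
  "comm_graph n p \<epsilon> E \<longleftrightarrow>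
     E \<subseteq> {{i, j} | i j. i < n \<and> j < n \<and> i \<noteq> j \<and> cmod (p i - p j) \<le> 2 + \<epsilon>} \<and>
     (\<forall>i<n. \<forall>j<n. (i, j) \<in> {(a, b). {a, b} \<in> E}\<^sup>*)"

definition robot_pos :: "(nat \<Rightarrow> complex) \<Rightarrow> (nat \<Rightarrow> real) \<Rightarrow> (nat \<Rightarrow> real) \<Rightarrow> nat \<Rightarrow> real \<Rightarrow> complex" where
  "robot_pos p f g i t = p i + cis (f i + 2 * pi * g i * t)"

definition schedule :: "nat \<Rightarrow> (nat \<Rightarrow> real) \<Rightarrow> (nat \<Rightarrow> real) \<Rightarrow> bool" where
  "schedule n f g \<longleftrightarrow> (\<forall>i<n. 0 \<le> f i \<and> f i < 2 * pi \<and> (g i = 1 \<or> g i = -1))"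

definition synchronized :: "(nat \<Rightarrow> complex) \<Rightarrow> (nat \<Rightarrow> real) \<Rightarrow> (nat \<Rightarrow> real) \<Rightarrow> nat set set \<Rightarrow> bool" where
  "synchronized p f g E \<longleftrightarrow>
     (\<forall>i j. {i, j} \<in> E \<longrightarrow>
        (\<forall>t. robot_pos p f g i t = linkpt p i j \<longleftrightarrow> robot_pos p f g j t = linkpt p j i))"

definition SCS :: "nat \<Rightarrow> (nat \<Rightarrow> complex) \<Rightarrow> real \<Rightarrow> nat set set \<Rightarrow> (nat \<Rightarrow> real) \<Rightarrow> (nat \<Rightarrow> real) \<Rightarrow> bool" where
  "SCS n p \<epsilon> E f g \<longleftrightarrow> valid_trajectories n p \<epsilon> \<and> comm_graph n p \<epsilon> E \<and> schedule n f g \<and>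
     synchronized p f g E \<and> (\<forall>i j. {i, j} \<in> E \<longrightarrow> g i = - g j)"

text \<open>Motion of a starving robot (a traversal of a ring): from time tau 0 on it is on
  circle k 0; during (tau s, tau (s+1)) it is on circle k s following its schedule and
  meets no link position; at time tau (s+1) it is at the link position phi_{k s, k (s+1)}
  and shifts to C_{k (s+1)}, i.e. it always shifts at every link position reached.\<close>
definition ring_traversal :: "nat \<Rightarrow> (nat \<Rightarrow> complex) \<Rightarrow> (nat \<Rightarrow> real) \<Rightarrow> (nat \<Rightarrow> real) \<Rightarrow> nat set set
     \<Rightarrow> (nat \<Rightarrow> nat) \<Rightarrow> (nat \<Rightarrow> real) \<Rightarrow> bool" where
  "ring_traversal n p f g E k \<tau> \<longleftrightarrow> k 0 < n \<and> (\<forall>s. \<tau> s < \<tau> (Suc s)) \<and>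
     (\<forall>s. {k s, k (Suc s)} \<in> E \<and> robot_pos p f g (k s) (\<tau> (Suc s)) = linkpt p (k s) (k (Suc s))) \<and>
     (\<forall>s t l. \<tau> s < t \<and> t < \<tau> (Suc s) \<and> {k s, l} \<in> E \<longrightarrow> robot_pos p f g (k s) t \<noteq> linkpt p (k s) l)"

definition crosses :: "(nat \<Rightarrow> nat) \<Rightarrow> (nat \<Rightarrow> real) \<Rightarrow> nat \<Rightarrow> nat \<Rightarrow> real \<Rightarrow> bool" where
  "crosses k \<tau> a b t \<longleftrightarrow> (\<exists>s. k s = a \<and> k (Suc s) = b \<and> \<tau> (Suc s) = t)"

definition ring_crosses_itself :: "(nat \<Rightarrow> nat) \<Rightarrow> nat \<Rightarrow> nat \<Rightarrow> bool" where
  "ring_crosses_itself k i j \<longleftrightarrow>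
     (\<exists>s. k s = i \<and> k (Suc s) = j) \<and> (\<exists>s. k s = j \<and> k (Suc s) = i)"

end

theory Submission
  imports Defs
begin

lemma shift_robot:
  assumes "robot_pos p f g c u = robot_pos p f g c v"
  shows "robot_pos p f g c (t + (v - u)) = robot_pos p f g c t"
proof -
  define u' where "u' = f c + 2 * pi * g c * u"
  define v' where "v' = f c + 2 * pi * g c * v"
  define a where "a = f c + 2 * pi * g c * t"
  have e: "cis u' = cis v'" using assms unfolding robot_pos_def u'_def v'_def by simp
  have "f c + 2 * pi * g c * (t + (v - u)) = a + (v' - u')"
    unfolding a_def u'_def v'_def by (simp add: algebra_simps)
  moreover have "cis (a + (v' - u')) = cis a * (cis v' / cis u')"
    by (simp add: cis_mult cis_divide)
  moreover have "cis v' / cis u' = 1" using e by simp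
  ultimately show ?thesis unfolding robot_pos_def a_def by (simp add: add.assoc)
qed

locale ringctx =
  fixes n p \<epsilon> E f g k \<tau>
  assumes scs: "SCS n p \<epsilon> E f g"
    and rt: "ring_traversal n p f g E k \<tau>"
begin

lemma edge: "{k s, k (Suc s)} \<in> E"
  using rt unfolding ring_traversal_def by blast

lemma link: "robot_pos p f g (k s) (\<tau> (Suc s)) = linkpt p (k s) (k (Suc s))"
  using rt unfolding ring_traversal_def by blast

lemma nolink: "\<tau> s < t \<Longrightarrow> t < \<tau> (Suc s) \<Longrightarrow> {k s, l} \<in> E \<Longrightarrow>
    robot_pos p f g (k s) t \<noteq> linkpt p (k s) l"
  using rt unfolding ring_traversal_def by blast

lemma arrive: "robot_pos p f g (k (Suc s)) (\<tau> (Suc s)) = linkpt p (k (Suc s)) (k s)"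
proof -
  have "synchronized p f g E" using scs unfolding SCS_def by blast
  then show ?thesis using edge[of s] link[of s] unfolding synchronized_def by blast
qed

lemma tmono: "a < b \<Longrightarrow> \<tau> a < \<tau> b"
proof -
  have "\<forall>s. \<tau> s < \<tau> (Suc s)" using rt unfolding ring_traversal_def by blast
  then have "strict_mono \<tau>" by (simp add: strict_mono_Suc_iff)
  then show "a < b \<Longrightarrow> \<tau> a < \<tau> b" by (simp add: strict_mono_less)
qed

lemma edge_props:
  assumes "{a, b} \<in> E"
  shows "a < n \<and> b < n \<and> a \<noteq> b \<and> cmod (p a - p b) \<le> 2 + \<epsilon>"
proof -
  have "comm_graph n p \<epsilon> E" using scs unfolding SCS_def by blast
  then obtain i j where "{a, b} = {i, j}" "i < n" "j < n" "i \<noteq> j" "cmod (p i - p j) \<le> 2 + \<epsilon>"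
    using assms unfolding comm_graph_def by blast
  then show ?thesis by (auto simp: doubleton_eq_iff norm_minus_commute)
qed

lemma linkinj:
  assumes "{c, l} \<in> E" "{c, l'} \<in> E" "linkpt p c l = linkpt p c l'"
  shows "l = l'"
proof (rule ccontr)
  assume ne: "l \<noteq> l'"
  have vt: "valid_trajectories n p \<epsilon>" using scs unfolding SCS_def by blast
  note A = edge_props[OF assms(1)] and B = edge_props[OF assms(2)]
  define r where "r = cmod (p l - p c)"
  define r' where "r' = cmod (p l' - p c)"
  have r2: "r > 2" "r \<le> 2 + \<epsilon>" using vt A unfolding r_def valid_trajectories_def
    by (auto simp: norm_minus_commute)
  have r2': "r' > 2" "r' \<le> 2 + \<epsilon>" using vt B unfolding r'_def valid_trajectories_def
    by (auto simp: norm_minus_commute)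
  have eps: "\<epsilon> < 1/2" using vt unfolding valid_trajectories_def by blast
  have far: "cmod (p l - p l') > 2" using vt A B ne unfolding valid_trajectories_def by blast
  define u where "u = (p l - p c) / complex_of_real r"
  have eq: "(p l - p c) / complex_of_real r = (p l' - p c) / complex_of_real r'"
    using assms(3) unfolding linkpt_def r_def r'_def by simp
  have rn0: "complex_of_real r \<noteq> 0" "complex_of_real r' \<noteq> 0" using r2 r2' by auto
  have h1: "p l - p c = complex_of_real r * u" using rn0 unfolding u_def by simp
  have h2: "p l' - p c = complex_of_real r' * u" using rn0 eq unfolding u_def by simp
  have "cmod u = 1" unfolding u_def r_def using r2 r_def
    by (auto simp: norm_divide)
  have "p l - p l' = complex_of_real (r - r') * u" using h1 h2
    by (simp add: algebra_simps)
  then have "cmod (p l - p l') = \<bar>r - r'\<bar>" using \<open>cmod u = 1\<close> by (simp add: norm_mult del: of_real_diff)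
  also have "\<dots> < 1" using r2 r2' eps by auto
  finally show False using far by simp
qed

lemma F:
  assumes "k a = k b" "k (Suc a) = k (Suc b)"
  shows "k (Suc (Suc a)) = k (Suc (Suc b)) \<and>
    \<tau> (Suc (Suc a)) - \<tau> (Suc a) = \<tau> (Suc (Suc b)) - \<tau> (Suc b)"
proof -
  define c where "c = k (Suc a)"
  define R where "R = robot_pos p f g c"
  have e1: "R (\<tau> (Suc a)) = R (\<tau> (Suc b))" using arrive[of a] arrive[of b] assms
    by (simp add: R_def c_def)
  define d where "d = \<tau> (Suc b) - \<tau> (Suc a)"
  have sh: "\<And>t. R (t + d) = R t" using shift_robot e1 unfolding R_def d_def by blast
  have la: "R (\<tau> (Suc (Suc a))) = linkpt p c (k (Suc (Suc a)))"
    using link[of "Suc a"] by (simp add: R_def c_def)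
  have lb: "R (\<tau> (Suc (Suc b))) = linkpt p c (k (Suc (Suc b)))"
    using link[of "Suc b"] assms by (simp add: R_def c_def)
  have ea: "{c, k (Suc (Suc a))} \<in> E" using edge[of "Suc a"] by (simp add: c_def)
  have eb: "{c, k (Suc (Suc b))} \<in> E" using edge[of "Suc b"] assms by (simp add: c_def)
  have oa: "\<tau> (Suc a) < \<tau> (Suc (Suc a))" and ob: "\<tau> (Suc b) < \<tau> (Suc (Suc b))"
    by (simp_all add: tmono)
  have x: "\<tau> (Suc (Suc a)) = \<tau> (Suc (Suc b)) - d"
  proof (rule ccontr)
    assume "\<tau> (Suc (Suc a)) \<noteq> \<tau> (Suc (Suc b)) - d"
    then consider (lt) "\<tau> (Suc (Suc a)) < \<tau> (Suc (Suc b)) - d"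
      | (gt) "\<tau> (Suc (Suc a)) > \<tau> (Suc (Suc b)) - d" by linarith
    then show False
    proof cases
      case lt
      have "R (\<tau> (Suc (Suc a)) + d) = linkpt p c (k (Suc (Suc a)))" using sh la by simp
      moreover have "\<tau> (Suc b) < \<tau> (Suc (Suc a)) + d" "\<tau> (Suc (Suc a)) + d < \<tau> (Suc (Suc b))"
        using lt oa d_def by simp_all
      ultimately show False using nolink[of "Suc b" "\<tau> (Suc (Suc a)) + d" "k (Suc (Suc a))"] ea assms
        by (simp add: R_def c_def)
    next
      case gt
      have "R (\<tau> (Suc (Suc b)) - d) = linkpt p c (k (Suc (Suc b)))"
        using sh[of "\<tau> (Suc (Suc b)) - d"] lb by simp
      moreover have "\<tau> (Suc a) < \<tau> (Suc (Suc b)) - d" "\<tau> (Suc (Suc b)) - d < \<tau> (Suc (Suc a))"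
        using gt ob d_def by simp_all
      ultimately show False using nolink[of "Suc a" "\<tau> (Suc (Suc b)) - d" "k (Suc (Suc b))"] eb
        by (simp add: R_def c_def)
    qed
  qed
  then have "linkpt p c (k (Suc (Suc a))) = linkpt p c (k (Suc (Suc b)))"
    using la lb sh[of "\<tau> (Suc (Suc a))"] by simp
  then have "k (Suc (Suc a)) = k (Suc (Suc b))" using linkinj ea eb by blast
  then show ?thesis using x d_def by simp
qed

lemma B:
  assumes "k (Suc a) = k (Suc b)" "k (Suc (Suc a)) = k (Suc (Suc b))"
  shows "k a = k b \<and> \<tau> (Suc (Suc a)) - \<tau> (Suc a) = \<tau> (Suc (Suc b)) - \<tau> (Suc b)"
proof -
  define c where "c = k (Suc a)"
  define R where "R = robot_pos p f g c"
  have e1: "R (\<tau> (Suc (Suc a))) = R (\<tau> (Suc (Suc b)))" using link[of "Suc a"] link[of "Suc b"] assms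
    by (simp add: R_def c_def)
  define d where "d = \<tau> (Suc (Suc b)) - \<tau> (Suc (Suc a))"
  have sh: "\<And>t. R (t + d) = R t" using shift_robot e1 unfolding R_def d_def by blast
  have la: "R (\<tau> (Suc a)) = linkpt p c (k a)"
    using arrive[of a] by (simp add: R_def c_def)
  have lb: "R (\<tau> (Suc b)) = linkpt p c (k b)"
    using arrive[of b] assms by (simp add: R_def c_def)
  have ea: "{c, k a} \<in> E" using edge[of a] by (simp add: c_def insert_commute)
  have eb: "{c, k b} \<in> E" using edge[of b] assms by (simp add: c_def insert_commute)
  have oa: "\<tau> (Suc a) < \<tau> (Suc (Suc a))" and ob: "\<tau> (Suc b) < \<tau> (Suc (Suc b))"
    by (simp_all add: tmono)
  have x: "\<tau> (Suc a) = \<tau> (Suc b) - d"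
  proof (rule ccontr)
    assume "\<tau> (Suc a) \<noteq> \<tau> (Suc b) - d"
    then consider (lt) "\<tau> (Suc a) < \<tau> (Suc b) - d"
      | (gt) "\<tau> (Suc a) > \<tau> (Suc b) - d" by linarith
    then show False
    proof cases
      case lt
      have "R (\<tau> (Suc b) - d) = linkpt p c (k b)" using sh[of "\<tau> (Suc b) - d"] lb by simp
      moreover have "\<tau> (Suc a) < \<tau> (Suc b) - d" "\<tau> (Suc b) - d < \<tau> (Suc (Suc a))"
        using lt ob d_def by simp_all
      ultimately show False using nolink[of "Suc a" "\<tau> (Suc b) - d" "k b"] eb
        by (simp add: R_def c_def)
    next
      case gt
      have "R (\<tau> (Suc a) + d) = linkpt p c (k a)" using sh la by simp
      moreover have "\<tau> (Suc b) < \<tau> (Suc a) + d" "\<tau> (Suc a) + d < \<tau> (Suc (Suc b))"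
        using gt oa d_def by simp_all
      ultimately show False using nolink[of "Suc b" "\<tau> (Suc a) + d" "k a"] ea assms
        by (simp add: R_def c_def)
    qed
  qed
  then have "linkpt p c (k a) = linkpt p c (k b)"
    using la lb sh[of "\<tau> (Suc a)"] by simp
  then have "k a = k b" using linkinj ea eb by blast
  then show ?thesis using x d_def by simp
qed

lemma Z:
  assumes "P \<ge> 1" "k 0 = k P" "k 1 = k (Suc P)"
  shows "\<tau> P \<le> \<tau> 0 + (\<tau> (Suc P) - \<tau> 1)"
proof (rule ccontr)
  assume H: "\<not> ?thesis"
  define c where "c = k 0"
  define R where "R = robot_pos p f g c"
  have e1: "R (\<tau> 1) = R (\<tau> (Suc P))" using link[of 0] link[of P] assms
    by (simp add: R_def c_def)
  define d where "d = \<tau> (Suc P) - \<tau> 1"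
  have sh: "\<And>t. R (t + d) = R t" using shift_robot e1 unfolding R_def d_def by blast
  obtain q where q: "P = Suc q" using assms(1) by (cases P) auto
  have lP: "R (\<tau> P) = linkpt p c (k q)" using arrive[of q] q assms by (simp add: R_def c_def)
  have eP: "{c, k q} \<in> E" using edge[of q] q assms by (simp add: c_def insert_commute)
  have "R (\<tau> P - d) = linkpt p c (k q)" using sh[of "\<tau> P - d"] lP by simp
  moreover have "\<tau> 0 < \<tau> P - d" using H d_def by simp
  moreover have "\<tau> P - d < \<tau> 1" using tmono[of P "Suc P"] d_def by simp
  ultimately show False using nolink[of 0 "\<tau> P - d" "k q"] eP by (simp add: R_def c_def)
qed

end

theorem lemma6:
  assumes "SCS n p \<epsilon> E f g"
    and "ring_traversal n p f g E k \<tau>"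
    and "ring_crosses_itself k i j"
  shows "(\<exists>T > 0. \<forall>t > \<tau> 0.
            (crosses k \<tau> i j t \<longleftrightarrow> crosses k \<tau> i j (t + T)) \<and>
            (crosses k \<tau> j i t \<longleftrightarrow> crosses k \<tau> j i (t + T)))
       \<and> (\<forall>s s'. s < s' \<and> {k s, k (Suc s)} = {i, j} \<and> {k s', k (Suc s')} = {i, j} \<and>
            (\<forall>s''. s < s'' \<and> s'' < s' \<longrightarrow> {k s'', k (Suc s'')} \<noteq> {i, j})
            \<longrightarrow> k s' = k (Suc s) \<and> k (Suc s') = k s)"
proof -
  interpret ringctx n p \<epsilon> E f g k \<tau> using assms(1,2) by unfold_locales
  define ev where "ev s = (k s, k (Suc s))" for s
  have Fi: "ev (a + m) = ev (b + m)" if "ev a = ev b" for a b m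
    using that by (induction m) (auto simp: ev_def dest: F)
  have Bi: "ev a = ev b" if "ev (a + m) = ev (b + m)" for a b m
    using that proof (induction m arbitrary: a b)
    case 0 then show ?case by simp
  next
    case (Suc m)
    have "ev (Suc a + m) = ev (Suc b + m)" using Suc.prems by simp
    then have "ev (Suc a) = ev (Suc b)" using Suc.IH by blast
    then show ?case using B[of a b] by (simp add: ev_def)
  qed
  have rng: "range ev \<subseteq> {..<n} \<times> {..<n}"
    using edge_props[OF edge] by (auto simp: ev_def)
  have "\<not> inj ev"
  proof
    assume "inj ev"
    moreover have "finite (range ev)" using rng finite_subset by blast
    ultimately have "finite (UNIV :: nat set)" using finite_imageD by blast
    then show False by simp
  qed
  then obtain a b where ab: "a < b" "ev a = ev b"
    unfolding inj_def by (metis linorder_neqE_nat)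
  define P where "P = b - a"
  have P1: "P \<ge> 1" using ab P_def by simp
  have ev0P: "ev 0 = ev P" using Bi[of 0 a P] ab P_def by (simp add: add.commute)
  have per: "ev m = ev (m + P)" for m using Fi[OF ev0P, of m] by (simp add: add.commute)
  have gap: "\<tau> (Suc (Suc (m + P))) - \<tau> (Suc (m + P)) = \<tau> (Suc (Suc m)) - \<tau> (Suc m)" for m
    using F[of m "m + P"] per[of m] by (simp add: ev_def)
  define T where "T = \<tau> (Suc P) - \<tau> 1"
  have tper: "\<tau> (Suc m + P) = \<tau> (Suc m) + T" for m
  proof (induction m)
    case 0 then show ?case by (simp add: T_def)
  next
    case (Suc m) then show ?case using gap[of m] by simp
  qed
  have Tpos: "T > 0" using tmono[of 1 "Suc P"] P1 T_def by simp
  have ZZ: "\<tau> P \<le> \<tau> 0 + T" using Z[OF P1] ev0P by (simp add: ev_def T_def)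
  have cr: "crosses k \<tau> x y t \<longleftrightarrow> crosses k \<tau> x y (t + T)" if "t > \<tau> 0" for x y t
  proof
    assume "crosses k \<tau> x y t"
    then obtain s where "k s = x" "k (Suc s) = y" "\<tau> (Suc s) = t" unfolding crosses_def by blast
    moreover have "ev (s + P) = ev s" using per[of s] by simp
    ultimately show "crosses k \<tau> x y (t + T)" unfolding crosses_def
      using tper[of s] by (intro exI[of _ "s + P"]) (auto simp: ev_def)
  next
    assume "crosses k \<tau> x y (t + T)"
    then obtain s where s: "k s = x" "k (Suc s) = y" "\<tau> (Suc s) = t + T" unfolding crosses_def by blast
    show "crosses k \<tau> x y t"
    proof (cases "s \<ge> P")
      case True
      define s0 where "s0 = s - P"
      have sP: "s = s0 + P" using True s0_def by simp
      have "ev s0 = ev s" using per[of s0] sP by simp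
      moreover have "\<tau> (Suc s0) = t" using tper[of s0] s sP by simp
      ultimately show ?thesis unfolding crosses_def using s by (auto simp: ev_def)
    next
      case False
      then have "\<tau> (Suc s) \<le> \<tau> P" using tmono[of "Suc s" P]
        by (cases "Suc s = P") auto
      then show ?thesis using s ZZ that by simp
    qed
  qed
  have part2: "k s' = k (Suc s) \<and> k (Suc s') = k s"
    if H: "s < s'" "{k s, k (Suc s)} = {i, j}" "{k s', k (Suc s')} = {i, j}"
      "\<forall>s''. s < s'' \<and> s'' < s' \<longrightarrow> {k s'', k (Suc s'')} \<noteq> {i, j}" for s s'
  proof (rule ccontr)
    assume nc: "\<not> ?thesis"
    have ne: "k s \<noteq> k (Suc s)" using edge_props[OF edge[of s]] by simp
    have ev_eq: "ev s' = ev s" using H(2,3) nc ne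
      by (auto simp: ev_def doubleton_eq_iff)
    define Q where "Q = s' - s"
    have Q1: "Q \<ge> 1" using H Q_def by simp
    have e0Q: "ev 0 = ev Q" using Bi[of 0 s Q] ev_eq Q_def H(1) by (simp add: add.commute)
    have perQ: "ev (x + Q) = ev x" for x using Fi[OF e0Q, of x] by (simp add: add.commute)
    have perQc: "ev (x + c * Q) = ev x" for x c
    proof (induction c)
      case 0 then show ?case by simp
    next
      case (Suc c)
      have "ev (x + Suc c * Q) = ev ((x + c * Q) + Q)" by (simp add: algebra_simps)
      then show ?case using perQ Suc by simp
    qed
    have ij: "i \<noteq> j" using H(2) ne by auto
    obtain u where u: "ev u = (k (Suc s), k s)"
      using assms(3) H(2) unfolding ring_crosses_itself_def
      by (auto simp: ev_def doubleton_eq_iff)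
    define w where "w = u + (s + 1) * Q"
    have sQ: "s \<le> s * Q" using Q1 by simp
    have "(s + 1) * Q = s * Q + Q" by simp
    then have wge: "w \<ge> s + 1" using Q1 sQ unfolding w_def by linarith
    have evw: "ev w = ev u" using perQc[of u "s + 1"] unfolding w_def .
    define r where "r = (w - (s + 1)) mod Q"
    define q where "q = (w - (s + 1)) div Q"
    have "q * Q + r = w - (s + 1)" unfolding r_def q_def by (rule div_mult_mod_eq)
    then have wdec: "w = (s + 1 + r) + q * Q" using wge by linarith
    have rQ: "r < Q" using Q1 r_def by simp
    have evr: "ev (s + 1 + r) = (k (Suc s), k s)" using perQc[of "s + 1 + r" q] wdec evw u by simp
    show False
    proof (cases "s + 1 + r = s'")
      case True
      then show ?thesis using evr ev_eq ne by (simp add: ev_def)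
    next
      case False
      then have "s < s + 1 + r" "s + 1 + r < s'" using rQ Q_def H(1) by auto
      then have "{k (s + 1 + r), k (Suc (s + 1 + r))} \<noteq> {i, j}" using H(4) by blast
      moreover have "{k (s + 1 + r), k (Suc (s + 1 + r))} = {k (Suc s), k s}" using evr by (simp add: ev_def)
      ultimately show ?thesis using H(2) by (simp add: insert_commute)
    qed
  qed
  show ?thesis using cr Tpos part2 by blast
qed

end
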